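(* Consider an instance of the problem $P_m \mid r_j \le d \mid \sum w_j F_j$ as defined in the context (finite job set $J$, processing times $p_j>0$, weights $w_j>0$, deadline $d\ge 0$, $m\ge 1$ identical machines). In every optimal solution $(\pi_1,\dots,\pi_m)$, for each machine $i$, the jobs of $J_{\mathrm{late}}(\pi_i)$ (the jobs on machine $i$ starting at or after $d$) appear in $\pi_i$ in nondecreasing order of the ratio $p_j/w_j$ (i.e. they are sorted according to the WSPT rule).
   Context: An instance consists of a finite set $J$ of jobs, each job $j$ having a processing time $p_j>0$ and a weight $w_j>0$, a common deadline $d\ge 0$, and a number $m\ge 1$ of identical machines. A single-machine schedule is a finite sequence $\pi$ of distinct jobs processed consecutively without idle time starting at time $0$: the start time of job $j$ in $\pi$ is $S_j=\sum_{k \text{ before } j \text{ in } \pi} p_k$ and its completion time is $C_j=S_j+p_j$. Let $J_{\mathrm{pri}}(\pi)=\{j\in\pi : S_j<d\}$ and $J_{\mathrm{late}}(\pi)=\{j\in\pi: S_j\ge d\}$. The cost of $\pi$ is $$\phi(\pi)=\sum_{j\in J_{\mathrm{pri}}(\pi)} w_j p_j+\sum_{j\in J_{\mathrm{late}}(\pi)} w_j\,(C_j-d).$$ (This is the total weighted flowtime $\sum_j w_j(C_j-r_j)$ when each release date $r_j$ is a decision variable constrained by $r_j\le d$ and chosen optimally as $r_j=\min(S_j,d)$.) A solution is a tuple $(\pi_1,\dots,\pi_m)$ of single-machine schedules such that every job of $J$ appears in exactly one $\pi_i$; its cost is $\sum_{i=1}^m\phi(\pi_i)$, and a solution is optimal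 if its cost is minimal among all solutions. This problem is denoted $P_m \mid r_j \le d \mid \sum w_j F_j$. *)

theory Defs
  imports Main "HOL-Library.Multiset" Complex_Main
begin

text \<open>A single-machine schedule is a list of distinct jobs processed without idle time
from time 0. Positions are indexed by k < length xs.\<close>

definition start_time :: "('j \<Rightarrow> real) \<Rightarrow> 'j list \<Rightarrow> nat \<Rightarrow> real" where
  "start_time p xs k = (\<Sum>i<k. p (xs ! i))"

definition compl_time :: "('j \<Rightarrow> real) \<Rightarrow> 'j list \<Rightarrow> nat \<Rightarrow> real" where
  "compl_time p xs k = start_time p xs k + p (xs ! k)"

definition sched_cost :: "('j \<Rightarrow> real) \<Rightarrow> ('j \<Rightarrow> real) \<Rightarrow> real \<Rightarrow> 'j list \<Rightarrow> real" where
  "sched_cost p w d xs =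
     (\<Sum>k<length xs. if start_time p xs k < d
                      then w (xs ! k) * p (xs ! k)
                      else w (xs ! k) * (compl_time p xs k - d))"

definition is_solution :: "'j set \<Rightarrow> nat \<Rightarrow> 'j list list \<Rightarrow> bool" where
  "is_solution J m sol \<longleftrightarrow>
     length sol = m \<and>
     (\<forall>i<m. distinct (sol ! i) \<and> set (sol ! i) \<subseteq> J) \<and>
     (\<forall>j\<in>J. \<exists>!i. i < m \<and> j \<in> set (sol ! i))"

definition total_cost :: "('j \<Rightarrow> real) \<Rightarrow> ('j \<Rightarrow> real) \<Rightarrow> real \<Rightarrow> 'j list list \<Rightarrow> real" where
  "total_cost p w d sol = (\<Sum>i<length sol. sched_cost p w d (sol ! i))"

definition is_optimal :: "'j set \<Rightarrow> ('j \<Rightarrow> real) \<Rightarrow> ('j \<Rightarrow> real) \<Rightarrow> real \<Rightarrow> nat \<Rightarrow> 'j list list \<Rightarrow> bool" where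
  "is_optimal J p w d m sol \<longleftrightarrow>
     is_solution J m sol \<and>
     (\<forall>sol'. is_solution J m sol' \<longrightarrow> total_cost p w d sol \<le> total_cost p w d sol')"

end

theory Submission
  imports Defs
begin

lemma sum_split2:
  fixes f :: "nat \<Rightarrow> real"
  assumes "k + 1 < n"
  shows "sum f {..<n} = sum f ({..<n} - {k, k+1}) + f k + f (k+1)"
proof -
  have "sum f {..<n} = sum f ({..<n} - {k, k+1}) + sum f {k, k+1}"
    using assms by (intro sum.subset_diff) auto
  then show ?thesis by simp
qed

definition swp :: "'j list \<Rightarrow> nat \<Rightarrow> 'j list" where
  "swp xs k = xs[k := xs ! (k+1), k+1 := xs ! k]"

lemma swp_nth:
  assumes "k + 1 < length xs"
  shows "length (swp xs k) = length xs"
    "swp xs k ! k = xs ! (k+1)" "swp xs k ! (k+1) = xs ! k" "swp xs k ! Suc k = xs ! k"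
    "\<And>j. j \<noteq> k \<Longrightarrow> j \<noteq> k+1 \<Longrightarrow> swp xs k ! j = xs ! j"
  using assms by (auto simp: swp_def nth_list_update)

lemma swp_set: "k + 1 < length xs \<Longrightarrow> set (swp xs k) = set xs"
  unfolding swp_def by (simp add: set_swap)

lemma swp_distinct: "k + 1 < length xs \<Longrightarrow> distinct xs \<Longrightarrow> distinct (swp xs k)"
  unfolding swp_def by (simp add: distinct_swap)

lemma st_low:
  assumes "k + 1 < length xs" "j \<le> k"
  shows "start_time p (swp xs k) j = start_time p xs j"
  unfolding start_time_def using assms
  by (intro sum.cong) (auto simp: swp_nth)

lemma st_high:
  assumes "k + 1 < length xs" "k + 1 < j"
  shows "start_time p (swp xs k) j = start_time p xs j"
proof -
  have "start_time p (swp xs k) j = (\<Sum>i\<in>{..<j} - {k, k+1}. p (swp xs k ! i)) + p (swp xs k ! k) + p (swp xs k ! (k+1))"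
    unfolding start_time_def by (rule sum_split2) (use assms in auto)
  also have "\<dots> = (\<Sum>i\<in>{..<j} - {k, k+1}. p (xs ! i)) + p (xs ! k) + p (xs ! (k+1))"
    using assms by (simp add: swp_nth)
  also have "\<dots> = start_time p xs j"
    unfolding start_time_def by (rule sum_split2[symmetric]) (use assms in auto)
  finally show ?thesis .
qed

lemma swap_cost:
  assumes len: "k + 1 < length xs" and late: "start_time p xs k \<ge> d"
    and pa: "p (xs ! k) \<ge> 0" and pb: "p (xs ! (k+1)) \<ge> 0"
  shows "sched_cost p w d xs - sched_cost p w d (swp xs k)
     = w (xs ! (k+1)) * p (xs ! k) - w (xs ! k) * p (xs ! (k+1))"
proof -
  define ys where "ys = swp xs k"
  define T where "T zs j = (if start_time p zs j < d then w (zs ! j) * p (zs ! j)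
                      else w (zs ! j) * (compl_time p zs j - d))" for zs j
  define S where "S = start_time p xs k"
  have ly: "length ys = length xs" using len by (simp add: ys_def swp_nth)
  have cx: "sched_cost p w d xs = sum (T xs) ({..<length xs} - {k, k+1}) + T xs k + T xs (k+1)"
    unfolding sched_cost_def T_def by (rule sum_split2[OF len])
  have cy: "sched_cost p w d ys = sum (T ys) ({..<length xs} - {k, k+1}) + T ys k + T ys (k+1)"
    unfolding sched_cost_def T_def ly by (rule sum_split2[OF len])
  have eq: "sum (T ys) ({..<length xs} - {k, k+1}) = sum (T xs) ({..<length xs} - {k, k+1})"
  proof (intro sum.cong refl)
    fix j assume j: "j \<in> {..<length xs} - {k, k+1}"
    have st: "start_time p ys j = start_time p xs j"
    proof (cases "j \<le> k")
      case True then show ?thesis unfolding ys_def by (rule st_low[OF len])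
    next
      case False then show ?thesis using j unfolding ys_def by (intro st_high[OF len]) auto
    qed
    have n: "ys ! j = xs ! j" using j len by (auto simp: ys_def swp_nth)
    show "T ys j = T xs j" unfolding T_def compl_time_def st n ..
  qed
  have sxk: "start_time p xs (Suc k) = S + p (xs ! k)"
    unfolding start_time_def S_def by simp
  have syk0: "start_time p ys k = S" unfolding ys_def S_def by (rule st_low[OF len]) simp
  have syk: "start_time p ys (Suc k) = S + p (xs ! (k+1))"
    using syk0 len unfolding start_time_def by (simp add: ys_def swp_nth)
  have n1: "ys ! k = xs ! (k+1)" "ys ! Suc k = xs ! k" using len by (auto simp: ys_def swp_nth)
  have "S \<ge> d" using late S_def by simp
  then have t: "T xs k = w (xs ! k) * (S + p (xs ! k) - d)"
     "T xs (k+1) = w (xs ! (k+1)) * (S + p (xs ! k) + p (xs ! (k+1)) - d)"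
     "T ys k = w (xs ! (k+1)) * (S + p (xs ! (k+1)) - d)"
     "T ys (k+1) = w (xs ! k) * (S + p (xs ! (k+1)) + p (xs ! k) - d)"
    using pa pb by (auto simp: T_def compl_time_def S_def[symmetric] sxk syk syk0 n1)
  show ?thesis unfolding ys_def[symmetric] cx cy eq t by (simp add: algebra_simps)
qed

theorem lemma1:
  fixes J :: "'j set" and p w :: "'j \<Rightarrow> real" and d :: real and m :: nat
    and sol :: "'j list list"
  assumes "finite J"
    and "\<forall>j\<in>J. p j > 0"
    and "\<forall>j\<in>J. w j > 0"
    and "d \<ge> 0"
    and "m \<ge> 1"
    and "is_optimal J p w d m sol"
  shows "\<forall>i<m. \<forall>a b. a < b \<and> b < length (sol ! i) \<and> start_time p (sol ! i) a \<ge> d \<longrightarrow>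
            p (sol ! i ! a) / w (sol ! i ! a) \<le> p (sol ! i ! b) / w (sol ! i ! b)"
proof (intro allI impI)
  fix i a b
  assume i: "i < m" and ab: "a < b \<and> b < length (sol ! i) \<and> start_time p (sol ! i) a \<ge> d"
  define xs where "xs = sol ! i"
  have sol: "is_solution J m sol" and opt: "\<And>s. is_solution J m s \<Longrightarrow> total_cost p w d sol \<le> total_cost p w d s"
    using assms(6) unfolding is_optimal_def by auto
  have lsol: "length sol = m" and dx: "distinct xs" and sx: "set xs \<subseteq> J"
    using sol i unfolding is_solution_def xs_def by auto
  have pos: "\<And>j. j < length xs \<Longrightarrow> p (xs ! j) > 0 \<and> w (xs ! j) > 0"
    using sx assms(2,3) nth_mem by blast
  let ?r = "\<lambda>j. p (xs ! j) / w (xs ! j)"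
  have mono: "start_time p xs a \<le> start_time p xs k" if "a \<le> k" "k < length xs" for k
    unfolding start_time_def
    by (rule sum_mono2) (use that pos in \<open>auto intro: less_imp_le\<close>)
  have adj: "?r k \<le> ?r (k+1)" if k: "a \<le> k" "k + 1 < length xs" for k
  proof (rule ccontr)
    assume neg: "\<not> ?r k \<le> ?r (k+1)"
    have pk: "p (xs ! k) > 0" "w (xs ! k) > 0" using pos k by auto
    have pk1: "p (xs ! (k+1)) > 0" "w (xs ! (k+1)) > 0" using pos k by auto
    have "p (xs ! (k+1)) * w (xs ! k) < p (xs ! k) * w (xs ! (k+1))"
      using neg pk pk1 by (simp add: divide_less_eq less_divide_eq field_simps)
    moreover have "start_time p xs k \<ge> d" using mono[of k] k ab xs_def by auto
    ultimately have lt: "sched_cost p w d (swp xs k) < sched_cost p w d xs"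
      using swap_cost[OF k(2), where p=p and d=d and w=w] pk pk1 by (simp add: algebra_simps)
    define sol' where "sol' = sol[i := swp xs k]"
    have ls': "length sol' = m" using lsol by (simp add: sol'_def)
    have ss: "\<And>j. j < m \<Longrightarrow> set (sol' ! j) = set (sol ! j) \<and> distinct (sol' ! j) = distinct (sol ! j)"
      using i k lsol dx unfolding sol'_def
      by (auto simp: nth_list_update swp_set swp_distinct xs_def)
    have "is_solution J m sol'"
      using sol unfolding is_solution_def ls' using ss by (simp cong: conj_cong)
    then have le: "total_cost p w d sol \<le> total_cost p w d sol'" by (rule opt)
    have "total_cost p w d sol' = total_cost p w d sol - sched_cost p w d xs + sched_cost p w d (swp xs k)"
    proof -
      have "total_cost p w d sol = (\<Sum>j\<in>{..<m} - {i}. sched_cost p w d (sol ! j)) + sched_cost p w d xs"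
        unfolding total_cost_def lsol xs_def using i by (subst sum.remove[of _ i]) auto
      moreover have "total_cost p w d sol' = (\<Sum>j\<in>{..<m} - {i}. sched_cost p w d (sol ! j)) + sched_cost p w d (swp xs k)"
        unfolding total_cost_def sol'_def using i lsol by (subst sum.remove[of _ i]) (auto simp: nth_list_update)
      ultimately show ?thesis by simp
    qed
    with le lt show False by simp
  qed
  have "\<forall>c. a + c < length xs \<longrightarrow> ?r a \<le> ?r (a + c)"
  proof (intro allI)
    fix c show "a + c < length xs \<longrightarrow> ?r a \<le> ?r (a + c)"
    proof (induction c)
      case 0 then show ?case by simp
    next
      case (Suc c)
      show ?case using Suc adj[of "a + c"] by auto
    qed
  qed
  then have "?r a \<le> ?r (a + (b - a))" using ab xs_def by (metis le_add_diff_inverse less_imp_le)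
  then show "p (sol ! i ! a) / w (sol ! i ! a) \<le> p (sol ! i ! b) / w (sol ! i ! b)"
    using ab xs_def by simp
qed

end
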